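(* Let $m \ge n$, let $A$ be an $m \times n$ matrix with integer coefficients of full rank $n$, and let $b \in \mathbb{Z}^m$. Set $H = \max_{i,j}\left(|A_{ij}|, |b_i|\right)$. If $b$ is not orthogonal to the image of $A$, then \[ \kappa_{LS}(A,b) \le 3\, n^{\frac{n}{2}+1} m^{n+\frac{1}{2}} H^{2n+1}. \]
   Context: Norms are Euclidean $2$-norms. Let $x \in \mathbb{R}^n$ be the minimizer of $\|Ax-b\|^2$ (least squares solution), $r = Ax - b$ the residual, and $\theta \in [0,\pi/2]$ defined by $\sin\theta = \|r\|/\|b\|$. Let $\sigma_{\max}(A)$ and $\sigma_{\min}(A)$ be the largest and smallest singular values of $A$ and $\kappa(A) = \sigma_{\max}(A)/\sigma_{\min}(A)$. The condition number of the least squares problem is \[ \kappa_{LS}(A,b) = \frac{2\kappa(A)}{\cos\theta} + \tan\theta\,\kappa(A)^2 . \] *)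

theory Defs
  imports "HOL-Analysis.Analysis"
begin

definition mat_eigenvalues :: "real^'n^'n \<Rightarrow> real set" where
  "mat_eigenvalues M = {e. \<exists>v. v \<noteq> 0 \<and> M *v v = e *\<^sub>R v}"

definition sigma_max :: "real^'n^'m \<Rightarrow> real" where
  "sigma_max A = sqrt (Max (mat_eigenvalues (transpose A ** A)))"

definition sigma_min :: "real^'n^'m \<Rightarrow> real" where
  "sigma_min A = sqrt (Min (mat_eigenvalues (transpose A ** A)))"

definition kappa :: "real^'n^'m \<Rightarrow> real" where
  "kappa A = sigma_max A / sigma_min A"

definition ls_solution :: "real^'n^'m \<Rightarrow> real^'m \<Rightarrow> real^'n" where
  "ls_solution A b = (THE x. \<forall>y. (norm (A *v x - b))\<^sup>2 \<le> (norm (A *v y - b))\<^sup>2)"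

definition ls_residual :: "real^'n^'m \<Rightarrow> real^'m \<Rightarrow> real^'m" where
  "ls_residual A b = A *v ls_solution A b - b"

definition ls_theta :: "real^'n^'m \<Rightarrow> real^'m \<Rightarrow> real" where
  "ls_theta A b = arcsin (norm (ls_residual A b) / norm b)"

definition kappa_LS :: "real^'n^'m \<Rightarrow> real^'m \<Rightarrow> real" where
  "kappa_LS A b = 2 * kappa A / cos (ls_theta A b) + tan (ls_theta A b) * (kappa A)\<^sup>2"

definition height :: "real^'n^'m \<Rightarrow> real^'m \<Rightarrow> real" where
  "height A b = Max ({\<bar>A $ i $ j\<bar> | i j. True} \<union> {\<bar>b $ i\<bar> | i. True})"

end

theory Submission imports Defs begin

lemma quad_eq:
  fixes A :: "real^'n^'m"
  shows "x \<bullet> ((transpose A ** A) *v y) = (A *v x) \<bullet> (A *v y)"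
  by (metis dot_lmul_matrix matrix_vector_mul_assoc vector_transpose_matrix)

lemma sym_dot:
  fixes G :: "real^'n^'n"
  assumes "transpose G = G"
  shows "x \<bullet> (G *v y) = (G *v x) \<bullet> y"
  by (metis assms dot_lmul_matrix vector_transpose_matrix)

lemma quad_pos_zero:
  fixes a c :: real
  assumes "\<And>t. 2 * t * a + t^2 * c \<ge> 0" "c \<ge> 0"
  shows "a = 0"
proof -
  have "2 * (-a/(c+1)) * a + (-a/(c+1))^2 * c \<ge> 0" using assms(1) .
  moreover have "2 * (-a/(c+1)) * a + (-a/(c+1))^2 * c = a^2 * (- c - 2) / (c+1)^2"
  proof -
    have h: "c + 1 \<noteq> 0" using assms(2) by simp
    show ?thesis using h by (simp add: divide_simps) (simp add: algebra_simps power2_eq_square)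
  qed
  ultimately have "a^2 * (- c - 2) / (c+1)^2 \<ge> 0" by simp
  moreover have "(c+1)^2 > 0" using assms(2) by simp
  ultimately have "a^2 * (- c - 2) \<ge> 0" by (simp add: zero_le_divide_iff)
  hence "a^2 * (c + 2) \<le> 0" by (simp add: algebra_simps)
  moreover have "c + 2 > 0" using assms(2) by simp
  ultimately have "a^2 \<le> 0" by (simp add: mult_le_0_iff)
  thus ?thesis by simp
qed

lemma inner_expand: fixes u w :: "real^'n" shows "(u + t *\<^sub>R w) \<bullet> (a + t *\<^sub>R b) =
       u \<bullet> a + t * (u \<bullet> b) + t * (w \<bullet> a) + t^2 * (w \<bullet> b)"
  apply (simp only: inner_add_left inner_add_right inner_scaleR_left inner_scaleR_right power2_eq_square)
  apply (simp only: ring_distribs mult.assoc add.assoc)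
  done

lemma eig_exists:
  fixes G :: "real^'n^'n"
  assumes symG: "transpose G = G"
  shows "\<exists>e v. v \<noteq> 0 \<and> G *v v = e *\<^sub>R v"
proof -
  let ?S = "sphere (0::real^'n) 1"
  have "?S \<noteq> {}" by simp
  moreover have "continuous_on ?S (\<lambda>v. v \<bullet> (G *v v))"
    by (intro continuous_intros continuous_on_id linear_continuous_on)
       (simp add: bounded_linear_def matrix_vector_mul_bounded_linear)
  ultimately obtain u where u: "u \<in> ?S" and umin: "\<forall>y\<in>?S. u \<bullet> (G *v u) \<le> y \<bullet> (G *v y)"
    using continuous_attains_inf[OF compact_sphere] by blast
  define mu where "mu = u \<bullet> (G *v u)"
  define q where "q v = v \<bullet> (G *v v) - mu * (v \<bullet> v)" for v
  have qpos: "q v \<ge> 0" for v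
  proof (cases "v = 0")
    case True thus ?thesis by (simp add: q_def)
  next
    case False
    let ?w = "v /\<^sub>R norm v"
    have "?w \<in> ?S" using False by simp
    hence "u \<bullet> (G *v u) \<le> ?w \<bullet> (G *v ?w)" using umin by blast
    hence "mu \<le> ?w \<bullet> (G *v ?w)" by (simp only: mu_def)
    also have "\<dots> = (v \<bullet> (G *v v)) / (norm v)^2"
      by (simp add: matrix_vector_mult_scaleR power2_eq_square divide_inverse mult_ac)
    finally have "mu * (norm v)^2 \<le> v \<bullet> (G *v v)" using False by (simp add: field_simps)
    thus ?thesis by (simp add: q_def power2_norm_eq_inner)
  qed
  have u1: "u \<bullet> u = 1" using u by (simp add: norm_eq_1)
  have qu: "q u = 0" using u1 by (simp add: q_def mu_def)
  define w where "w = G *v u - mu *\<^sub>R u"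
  have ww: "w \<bullet> w = w \<bullet> (G *v u) - mu * (w \<bullet> u)"
    by (subst (2) w_def) (simp add: inner_diff_right)
  have sy: "u \<bullet> (G *v w) = w \<bullet> (G *v u)" using sym_dot[OF symG, of u w] by (simp add: inner_commute)
  have expand: "q (u + t *\<^sub>R w) = q u + 2 * t * (w \<bullet> w) + t^2 * q w" for t
  proof -
    have e1: "G *v (u + t *\<^sub>R w) = G *v u + t *\<^sub>R (G *v w)"
      by (simp add: matrix_vector_right_distrib matrix_vector_mult_scaleR)
    have e2: "(u + t *\<^sub>R w) \<bullet> (G *v u + t *\<^sub>R (G *v w)) =
       u \<bullet> (G *v u) + t * (u \<bullet> (G *v w)) + t * (w \<bullet> (G *v u)) + t^2 * (w \<bullet> (G *v w))"
      by (rule inner_expand)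
    have e3: "(u + t *\<^sub>R w) \<bullet> (u + t *\<^sub>R w) = u \<bullet> u + 2 * t * (w \<bullet> u) + t^2 * (w \<bullet> w)"
      using inner_expand[of u t w u w] inner_commute[of u w] by simp
    show ?thesis unfolding q_def e1 e2 e3 sy ww
      by (simp add: algebra_simps power2_eq_square)
  qed
  have "w \<bullet> w = 0"
  proof (rule quad_pos_zero[of "w \<bullet> w" "q w"])
    fix t
    have "0 \<le> q (u + t *\<^sub>R w)" by (rule qpos)
    thus "0 \<le> 2 * t * (w \<bullet> w) + t\<^sup>2 * q w" using expand[of t] qu by simp
  qed (rule qpos)
  hence "G *v u = mu *\<^sub>R u" by (simp add: w_def)
  moreover have "u \<noteq> 0" using u by auto
  ultimately show ?thesis by blast
qed

lemma eig_finite: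
  fixes G :: "real^'n^'n"
  assumes symG: "transpose G = G"
  shows "finite (mat_eigenvalues G)"
proof -
  let ?E = "mat_eigenvalues G"
  define ev where "ev e = (SOME v. v \<noteq> 0 \<and> G *v v = e *\<^sub>R v)" for e
  have ev: "ev e \<noteq> 0 \<and> G *v ev e = e *\<^sub>R ev e" if "e \<in> ?E" for e
    unfolding ev_def by (rule someI_ex) (use that in \<open>simp add: mat_eigenvalues_def\<close>)
  have inj: "inj_on ev ?E"
  proof (rule inj_onI)
    fix x y assume "x \<in> ?E" "y \<in> ?E" "ev x = ev y"
    hence "x *\<^sub>R ev x = y *\<^sub>R ev x" "ev x \<noteq> 0" using ev by metis+
    thus "x = y" by (metis scaleR_cancel_right)
  qed
  have orth: "ev x \<bullet> ev y = 0" if "x \<in> ?E" "y \<in> ?E" "x \<noteq> y" for x y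
  proof -
    have "ev x \<bullet> (G *v ev y) = (G *v ev x) \<bullet> ev y" by (rule sym_dot[OF symG])
    hence "y * (ev x \<bullet> ev y) = x * (ev x \<bullet> ev y)" using ev that by simp
    thus ?thesis using that by simp
  qed
  have "pairwise orthogonal (ev ` ?E)"
    unfolding pairwise_def orthogonal_def using orth by auto
  moreover have "0 \<notin> ev ` ?E" using ev by auto
  ultimately have "independent (ev ` ?E)" by (rule pairwise_orthogonal_independent)
  hence "finite (ev ` ?E)" by (rule independent_imp_finite)
  thus ?thesis using inj finite_imageD by blast
qed

lemma det_unitri:
  fixes T :: "real^'n^'n" and idx :: "'n \<Rightarrow> nat"
  assumes inj: "inj idx"
    and tri: "\<And>l k. T$l$k \<noteq> 0 \<Longrightarrow> l = k \<or> idx l < idx k"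
    and diag: "\<And>k. T$k$k = 1"
  shows "det T = 1"
proof -
  let ?P = "{p. p permutes (UNIV::'n set)}"
  have key: "p = id" if p: "p permutes UNIV" and nz: "(\<Prod>i\<in>UNIV. T$i$p i) \<noteq> 0" for p
  proof -
    have "\<forall>i. T$i$p i \<noteq> 0" using nz by (auto simp: prod_zero_iff)
    hence le: "\<forall>i. i = p i \<or> idx i < idx (p i)" using tri by blast
    have sum_eq: "(\<Sum>i\<in>UNIV. idx (p i)) = (\<Sum>i\<in>UNIV. idx i)"
      using sum.permute[OF p, of idx] by (simp add: o_def)
    have "\<forall>i. \<not> idx i < idx (p i)"
    proof (rule ccontr)
      assume "\<not> (\<forall>i. \<not> idx i < idx (p i))"
      then obtain j where "idx j < idx (p j)" by blast
      moreover have "\<forall>i\<in>UNIV. idx i \<le> idx (p i)" using le by (metis order_refl less_imp_le)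
      ultimately have "(\<Sum>i\<in>UNIV. idx i) < (\<Sum>i\<in>UNIV. idx (p i))"
        by (intro sum_strict_mono_ex1) auto
      thus False using sum_eq by simp
    qed
    hence "\<forall>i. p i = i" using le by metis
    thus ?thesis by auto
  qed
  have "det T = (\<Sum>p\<in>?P. of_int (sign p) * (\<Prod>i\<in>UNIV. T$i$p i))" by (simp add: det_def)
  also have "\<dots> = (\<Sum>p\<in>?P. if p = id then 1 else 0)"
  proof (rule sum.cong[OF refl])
    fix p assume "p \<in> ?P"
    thus "of_int (sign p) * (\<Prod>i\<in>UNIV. T$i$p i) = (if p = id then 1 else 0)"
      using key[of p] diag by (auto simp: sign_id)
  qed
  also have "\<dots> = 1" using permutes_id[of UNIV] by (simp add: finite_permutations)
  finally show ?thesis .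
qed

lemma span_image_sum:
  fixes f :: "'i \<Rightarrow> 'a::real_vector"
  assumes "finite I" "y \<in> span (f ` I)"
  shows "\<exists>c. y = (\<Sum>l\<in>I. c l *\<^sub>R f l)"
  using assms(2)
proof (induction rule: span_induct_alt)
  case base
  show ?case by (rule exI[of _ "\<lambda>_. 0"]) simp
next
  case (step c x y)
  from step obtain l0 where l0: "l0 \<in> I" "x = f l0" by auto
  from step obtain d where d: "y = (\<Sum>l\<in>I. d l *\<^sub>R f l)" by auto
  have "c *\<^sub>R x + y = (\<Sum>l\<in>I. (d l + (if l = l0 then c else 0)) *\<^sub>R f l)"
    using l0 assms(1) by (simp add: d scaleR_add_left sum.distrib if_distrib[of "\<lambda>a. a *\<^sub>R f _"] sum.delta cong: if_cong)
  thus ?case by (rule exI[of _ "\<lambda>l. d l + (if l = l0 then c else 0)", OF _])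
qed


lemma mtm_entry:
  fixes Z :: "real^'n^'m"
  shows "(transpose Z ** Z)$i$j = column i Z \<bullet> column j Z"
  by (simp add: matrix_matrix_mult_def transpose_def column_def inner_vec_def)

lemma gram_schmidt_det:
  fixes A :: "real^'n^'m" and idx :: "'n \<Rightarrow> nat"
  assumes inj: "inj idx"
  shows "\<exists>z. (\<forall>k. column k A - z k \<in> span ((\<lambda>l. column l A) ` {l. idx l < idx k}))
           \<and> (\<forall>k w. w \<in> span ((\<lambda>l. column l A) ` {l. idx l < idx k}) \<longrightarrow> z k \<bullet> w = 0)
           \<and> det (transpose A ** A) = (\<Prod>k\<in>UNIV. z k \<bullet> z k)"
proof -
  define L where "L k = {l. idx l < idx k}" for k
  define S where "S k = (\<lambda>l. column l A) ` L k" for k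
  have "\<forall>k. \<exists>p. p \<in> span (S k) \<and> (\<forall>w\<in>span (S k). (column k A - p) \<bullet> w = 0)"
  proof
    fix k
    obtain y z where "y \<in> span (S k)" "\<And>w. w \<in> span (S k) \<Longrightarrow> orthogonal z w" "column k A = y + z"
      using orthogonal_subspace_decomp_exists by blast
    thus "\<exists>p. p \<in> span (S k) \<and> (\<forall>w\<in>span (S k). (column k A - p) \<bullet> w = 0)"
      by (intro exI[of _ y]) (auto simp: orthogonal_def)
  qed
  then obtain p where p: "\<And>k. p k \<in> span (S k)" "\<And>k w. w \<in> span (S k) \<Longrightarrow> (column k A - p k) \<bullet> w = 0"
    by metis
  define z where "z k = column k A - p k" for k
  have "\<forall>k. \<exists>c. p k = (\<Sum>l\<in>L k. c l *\<^sub>R column l A)"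
  proof
    fix k
    have fin: "finite (L k)" by simp
    show "\<exists>c. p k = (\<Sum>l\<in>L k. c l *\<^sub>R column l A)"
      using span_image_sum[OF fin, of "p k" "\<lambda>l. column l A"] p(1)[of k] by (simp add: S_def)
  qed
  then obtain t where t: "\<And>k. p k = (\<Sum>l\<in>L k. t k l *\<^sub>R column l A)" by metis
  define T :: "real^'n^'n" where "T = (\<chi> l k. if l = k then 1 else if idx l < idx k then - t k l else 0)"
  have detT: "det T = 1"
    by (rule det_unitri[OF inj]) (auto simp: T_def split: if_splits)
  define Z where "Z = A ** T"
  have Tlk: "T$l$k = (if l = k then 1 else 0) - (if l \<in> L k then t k l else 0)" for l k
    by (auto simp: T_def L_def)
  have colZ: "column k Z = z k" for k
  proof -
    have "(Z$i$k) = z k $ i" for i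
    proof -
      have "Z$i$k = (\<Sum>l\<in>UNIV. A$i$l * T$l$k)" by (simp add: Z_def matrix_matrix_mult_def)
      also have "\<dots> = (\<Sum>l\<in>UNIV. (if l = k then A$i$l else 0)) - (\<Sum>l\<in>UNIV. (if l \<in> L k then A$i$l * t k l else 0))"
      proof -
        have "(\<Sum>l\<in>UNIV. A$i$l * T$l$k) = (\<Sum>l\<in>UNIV. (if l = k then A$i$l else 0) - (if l \<in> L k then A$i$l * t k l else 0))"
          by (rule sum.cong) (auto simp: Tlk algebra_simps)
        thus ?thesis by (simp only: sum_subtractf)
      qed
      also have "\<dots> = A$i$k - (\<Sum>l\<in>L k. A$i$l * t k l)"
        by (simp add: sum.inter_restrict[symmetric])
      also have "\<dots> = z k $ i"
        by (simp add: z_def t column_def mult.commute)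
      finally show ?thesis .
    qed
    thus ?thesis by (simp add: column_def vec_eq_iff)
  qed
  have zspan: "z k \<in> span (S k) \<Longrightarrow> True" for k by simp
  have Ssub: "span (S i) \<subseteq> span (S j)" if "idx i < idx j" for i j
    using that by (intro span_mono) (auto simp: S_def L_def)
  have zin: "z i \<in> span (S j)" if "idx i < idx j" for i j
  proof -
    have "column i A \<in> span (S j)" using that by (intro span_base) (auto simp: S_def L_def)
    moreover have "p i \<in> span (S j)" using p(1) Ssub[OF that] by blast
    ultimately show ?thesis unfolding z_def by (rule span_diff)
  qed
  have orth: "z i \<bullet> z j = 0" if "i \<noteq> j" for i j
  proof (cases "idx i < idx j")
    case True
    thus ?thesis using p(2)[OF zin[OF True]] by (simp add: z_def inner_commute)
  next
    case False
    hence "idx j < idx i" using that inj by (metis injD linorder_neqE_nat)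
    thus ?thesis using p(2)[OF zin] by (simp add: z_def)
  qed
  have "det (transpose Z ** Z) = (\<Prod>k\<in>UNIV. (transpose Z ** Z)$k$k)"
    by (rule det_diagonal) (simp add: mtm_entry colZ orth)
  also have "\<dots> = (\<Prod>k\<in>UNIV. z k \<bullet> z k)" by (simp add: mtm_entry colZ)
  finally have d1: "det (transpose Z ** Z) = (\<Prod>k\<in>UNIV. z k \<bullet> z k)" .
  have "transpose Z ** Z = transpose T ** (transpose A ** A) ** T"
    by (simp add: Z_def matrix_transpose_mul matrix_mul_assoc)
  hence "det (transpose Z ** Z) = det (transpose A ** A)"
    by (simp add: det_mul detT)
  hence "det (transpose A ** A) = (\<Prod>k\<in>UNIV. z k \<bullet> z k)" using d1 by simp
  moreover have "column k A - z k \<in> span ((\<lambda>l. column l A) ` {l. idx l < idx k})" for k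
    using p(1)[of k] by (simp add: z_def S_def L_def)
  moreover have "z k \<bullet> w = 0" if "w \<in> span ((\<lambda>l. column l A) ` {l. idx l < idx k})" for k w
    using p(2)[of w k] that by (simp add: z_def S_def L_def)
  ultimately show ?thesis by blast
qed


lemma transpose_mv_comp:
  fixes A :: "real^'n^'m"
  shows "(transpose A *v y)$l = column l A \<bullet> y"
  by (simp add: matrix_vector_mult_def transpose_def column_def inner_vec_def mult.commute)

lemma diag_bound:
  fixes A :: "real^'n^'m"
  assumes detG: "det (transpose A ** A) \<noteq> 0"
    and g: "(transpose A ** A) *v g = axis i 1"
  shows "g$i * det (transpose A ** A) \<le> (\<Prod>k\<in>UNIV-{i}. column k A \<bullet> column k A)"
    and "det (transpose A ** A) > 0"
proof -
  obtain f :: "'n \<Rightarrow> nat" where f: "inj f"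
    using finite_imp_inj_to_nat_seg[of "UNIV :: 'n set"] by auto
  define N where "N = Suc (\<Sum>l\<in>UNIV. f l)"
  define idx where "idx k = (if k = i then N else f k)" for k
  have fle: "f k < N" for k unfolding N_def
    using member_le_sum[of k UNIV f] by simp
  have inj: "inj idx"
  proof (rule injI)
    fix x y assume "idx x = idx y"
    thus "x = y" using fle[of x] fle[of y] f unfolding idx_def by (auto split: if_splits dest: injD)
  qed
  have Li: "{l. idx l < idx i} = UNIV - {i}" using fle by (auto simp: idx_def)
  obtain z where z1: "\<And>k. column k A - z k \<in> span ((\<lambda>l. column l A) ` {l. idx l < idx k})"
    and z2: "\<And>k w. w \<in> span ((\<lambda>l. column l A) ` {l. idx l < idx k}) \<Longrightarrow> z k \<bullet> w = 0"
    and D: "det (transpose A ** A) = (\<Prod>k\<in>UNIV. z k \<bullet> z k)"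
    using gram_schmidt_det[OF inj, of A] by blast
  define d where "d k = z k \<bullet> z k" for k
  have dle: "d k \<le> column k A \<bullet> column k A" for k
  proof -
    have o: "z k \<bullet> (column k A - z k) = 0" using z2[OF z1] .
    have "column k A \<bullet> column k A = (column k A - z k) \<bullet> (column k A - z k) + z k \<bullet> z k"
      using o by (simp add: inner_diff_left inner_diff_right inner_commute)
    thus ?thesis unfolding d_def by simp
  qed
  have dnn: "d k \<ge> 0" for k unfolding d_def by simp
  have zai: "z i \<bullet> column i A = d i"
  proof -
    have o: "z i \<bullet> (column i A - z i) = 0" using z2[OF z1] .
    thus ?thesis by (simp add: d_def inner_diff_right)
  qed
  have zal: "z i \<bullet> column l A = 0" if "l \<noteq> i" for l
    by (rule z2) (rule span_base, use that Li in auto)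
  have colAg: "column l A \<bullet> (A *v g) = (if l = i then 1 else 0)" for l
  proof -
    have "column l A \<bullet> (A *v g) = (transpose A *v (A *v g))$l" by (rule transpose_mv_comp[symmetric])
    also have "\<dots> = ((transpose A ** A) *v g)$l" by (simp add: matrix_vector_mul_assoc)
    finally show ?thesis using g by (simp add: axis_def)
  qed
  have "z i \<bullet> (A *v g) = (\<Sum>l\<in>UNIV. g$l * (z i \<bullet> column l A))"
    by (simp add: matrix_mult_sum inner_sum_right scalar_mult_eq_scaleR)
  also have "\<dots> = g$i * d i"
    using zal zai by (simp add: sum.remove[of UNIV i] sum.neutral)
  finally have e1: "z i \<bullet> (A *v g) = g$i * d i" .
  have orthAg: "(column i A - z i) \<bullet> (A *v g) = 0"
  proof -
    have "orthogonal (A *v g) (column i A - z i)"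
      by (rule orthogonal_to_span[OF z1]) (use Li colAg in \<open>auto simp: orthogonal_def inner_commute\<close>)
    thus ?thesis by (simp add: orthogonal_def inner_commute)
  qed
  have "z i \<bullet> (A *v g) = column i A \<bullet> (A *v g)"
    using orthAg by (simp add: inner_diff_left)
  hence gd: "g$i * d i = 1" using e1 colAg[of i] by simp
  have Dsplit: "det (transpose A ** A) = d i * (\<Prod>k\<in>UNIV-{i}. d k)"
    unfolding D d_def by (simp add: prod.remove[of UNIV i])
  have Dnn: "det (transpose A ** A) \<ge> 0" unfolding D by (intro prod_nonneg) simp
  thus "det (transpose A ** A) > 0" using detG by simp
  have "g$i * det (transpose A ** A) = (\<Prod>k\<in>UNIV-{i}. d k)"
    using gd Dsplit by (simp add: mult.assoc[symmetric])
  also have "\<dots> \<le> (\<Prod>k\<in>UNIV-{i}. column k A \<bullet> column k A)"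
    by (intro prod_mono) (use dnn dle in auto)
  finally show "g$i * det (transpose A ** A) \<le> (\<Prod>k\<in>UNIV-{i}. column k A \<bullet> column k A)" .
qed

lemma normsq_vec: fixes v :: "real^'n" shows "v \<bullet> v = (\<Sum>i\<in>UNIV. (v$i)^2)"
  by (simp add: inner_vec_def power2_eq_square)

lemma Av_comp: fixes A :: "real^'n^'m" shows "(A *v v)$j = row j A \<bullet> v"
  by (simp add: matrix_vector_mult_def row_def inner_vec_def)

lemma norm_Av_le:
  fixes A :: "real^'n^'m"
  shows "(A *v v) \<bullet> (A *v v) \<le> (\<Sum>j\<in>UNIV. \<Sum>i\<in>UNIV. (A$j$i)^2) * (v \<bullet> v)"
proof -
  have "(A *v v) \<bullet> (A *v v) = (\<Sum>j\<in>UNIV. (row j A \<bullet> v)^2)" by (simp add: normsq_vec Av_comp)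
  also have "\<dots> \<le> (\<Sum>j\<in>UNIV. (row j A \<bullet> row j A) * (v \<bullet> v))"
    by (intro sum_mono Cauchy_Schwarz_ineq)
  also have "\<dots> = (\<Sum>j\<in>UNIV. \<Sum>i\<in>UNIV. (A$j$i)^2) * (v \<bullet> v)"
    by (simp add: sum_distrib_right normsq_vec row_def)
  finally show ?thesis .
qed

lemma solve_exists:
  fixes G :: "real^'n^'n"
  assumes "det G \<noteq> 0"
  shows "\<exists>x. G *v x = c"
  using cramer[OF assms] by blast

lemma kappa_bound:
  fixes A :: "real^'n^'m"
  assumes injA: "inj ((*v) A)" and hA: "\<And>i j. \<bar>A$i$j\<bar> \<le> H"
  shows "kappa A \<ge> 1"
    and "(kappa A)^2 * det (transpose A ** A) \<le> real CARD('n)^2 * real CARD('m)^CARD('n) * H^(2*CARD('n))"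
    and "det (transpose A ** A) > 0"
proof -
  define G where "G = transpose A ** A"
  define n where "n = CARD('n)"
  define m where "m = CARD('m)"
  have n1: "n \<ge> 1" unfolding n_def by (simp add: Suc_leI)
  have H0: "H \<ge> 0" using hA[of undefined undefined] by linarith
  have sqA: "(A$j$i)^2 \<le> H^2" for j i
    using power_mono[of "\<bar>A$j$i\<bar>" H 2] hA[of j i] by simp
  have symG: "transpose G = G" by (simp add: G_def matrix_transpose_mul)
  have qG: "x \<bullet> (G *v x) = (A *v x) \<bullet> (A *v x)" for x unfolding G_def by (rule quad_eq)
  have injG: "inj ((*v) G)"
  proof (rule injI)
    fix x y assume "G *v x = G *v y"
    hence "G *v (x - y) = 0" by (simp add: matrix_vector_mult_diff_distrib)
    hence "(A *v (x - y)) \<bullet> (A *v (x - y)) = 0" using qG[of "x - y"] by simp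
    hence "A *v (x - y) = 0" by simp
    hence "A *v x = A *v y" by (simp add: matrix_vector_mult_diff_distrib)
    thus "x = y" using injA by (simp add: inj_eq)
  qed
  have detG: "det G \<noteq> 0"
    using injG det_eq_0_rank[of G] less_rank_noninjective[of G] by auto
  define E where "E = mat_eigenvalues G"
  have finE: "finite E" unfolding E_def by (rule eig_finite[OF symG])
  have neE: "E \<noteq> {}"
  proof -
    obtain e v where "v \<noteq> 0" "G *v v = e *\<^sub>R v" using eig_exists[OF symG] by blast
    hence "e \<in> E" by (auto simp: E_def mat_eigenvalues_def)
    thus ?thesis by blast
  qed
  have eq_e: "e * (v \<bullet> v) = (A *v v) \<bullet> (A *v v)" if "G *v v = e *\<^sub>R v" for e v
    using qG[of v] that by simp
  define U where "U = (\<Sum>j\<in>UNIV. \<Sum>i\<in>UNIV. (A$j$i)^2)"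
  have Ule: "U \<le> real n * real m * H^2"
  proof -
    have "U \<le> (\<Sum>j\<in>(UNIV::'m set). \<Sum>i\<in>(UNIV::'n set). H^2)"
      unfolding U_def by (intro sum_mono) (rule sqA)
    thus ?thesis by (simp add: n_def m_def mult_ac)
  qed
  have eU: "e \<le> U" if "e \<in> E" for e
  proof -
    have "\<exists>v. v \<noteq> 0 \<and> G *v v = e *\<^sub>R v" using that by (simp add: E_def mat_eigenvalues_def)
    then obtain v where v: "v \<noteq> 0" "G *v v = e *\<^sub>R v" by blast
    have "e * (v \<bullet> v) \<le> U * (v \<bullet> v)" unfolding eq_e[OF v(2)] U_def by (rule norm_Av_le)
    moreover have "v \<bullet> v > 0" using v(1) by simp
    ultimately show ?thesis by simp
  qed
  have "\<forall>i. \<exists>x. G *v x = axis i 1" using solve_exists[OF detG] by blast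
  then obtain g where g: "\<And>i. G *v g i = axis i 1" by metis
  define S where "S = (\<Sum>i\<in>UNIV. g i $ i)"
  have colsq: "column k A \<bullet> column k A \<le> real m * H^2" for k
  proof -
    have "column k A \<bullet> column k A = (\<Sum>j\<in>UNIV. (A$j$k)^2)" by (simp add: normsq_vec column_def)
    also have "\<dots> \<le> (\<Sum>j\<in>(UNIV::'m set). H^2)"
      by (intro sum_mono) (rule sqA)
    finally show ?thesis by (simp add: m_def)
  qed
  have Dpos: "det G > 0" using diag_bound(2)[of A "g undefined" undefined] detG g unfolding G_def by blast
  have gi: "g i $ i * det G \<le> (real m * H^2)^(n - 1)" for i
  proof -
    have "g i $ i * det G \<le> (\<Prod>k\<in>UNIV-{i}. column k A \<bullet> column k A)"
      using diag_bound(1)[of A "g i" i] detG g unfolding G_def by blast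
    also have "\<dots> \<le> (\<Prod>k\<in>UNIV-{i}. real m * H^2)"
      by (intro prod_mono) (simp add: colsq)
    also have "\<dots> = (real m * H^2)^(n - 1)" by (simp add: n_def card_Diff_singleton)
    finally show ?thesis .
  qed
  have SD: "S * det G \<le> real n * (real m * H^2)^(n - 1)"
  proof -
    have "S * det G = (\<Sum>i\<in>UNIV. g i $ i * det G)" by (simp add: S_def sum_distrib_right)
    also have "\<dots> \<le> (\<Sum>i\<in>(UNIV::'n set). (real m * H^2)^(n - 1))" by (intro sum_mono gi)
    finally show ?thesis by (simp add: n_def)
  qed
  have vi: "v$i = (A *v g i) \<bullet> (A *v v)" for v i
  proof -
    have "v$i = (G *v g i) \<bullet> v" by (simp add: g inner_axis')
    also have "\<dots> = g i \<bullet> (G *v v)" by (simp add: sym_dot[OF symG])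
    also have "\<dots> = (A *v g i) \<bullet> (A *v v)" unfolding G_def by (rule quad_eq)
    finally show ?thesis .
  qed
  have Agi: "(A *v g i) \<bullet> (A *v g i) = g i $ i" for i
    using qG[of "g i"] g[of i] by (simp add: inner_axis)
  have vS: "v \<bullet> v \<le> S * ((A *v v) \<bullet> (A *v v))" for v
  proof -
    have "v \<bullet> v = (\<Sum>i\<in>UNIV. (v$i)^2)" by (rule normsq_vec)
    also have "\<dots> \<le> (\<Sum>i\<in>UNIV. g i $ i * ((A *v v) \<bullet> (A *v v)))"
      by (intro sum_mono) (metis vi Agi Cauchy_Schwarz_ineq)
    also have "\<dots> = S * ((A *v v) \<bullet> (A *v v))" by (simp add: S_def sum_distrib_right)
    finally show ?thesis .
  qed
  have eS: "1 \<le> S * e \<and> e > 0" if "e \<in> E" for e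
  proof -
    have "\<exists>v. v \<noteq> 0 \<and> G *v v = e *\<^sub>R v" using that by (simp add: E_def mat_eigenvalues_def)
    then obtain v where v: "v \<noteq> 0" "G *v v = e *\<^sub>R v" by blast
    have vv: "v \<bullet> v > 0" using v(1) by simp
    have "v \<bullet> v \<le> (S * e) * (v \<bullet> v)" using vS[of v] unfolding eq_e[OF v(2), symmetric] by (simp only: mult.assoc)
    hence 1: "1 \<le> S * e" using vv by simp
    have "e * (v \<bullet> v) \<ge> 0" using eq_e[OF v(2)] by simp
    hence "e \<ge> 0" using vv by (simp add: zero_le_mult_iff)
    hence "e > 0" using 1 by (cases "e = 0") auto
    with 1 show ?thesis by simp
  qed
  define Mx where "Mx = Max E"
  define Mn where "Mn = Min E"
  have MxE: "Mx \<in> E" unfolding Mx_def using finE neE by simp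
  have MnE: "Mn \<in> E" unfolding Mn_def using finE neE by simp
  have MnMx: "Mn \<le> Mx" unfolding Mn_def Mx_def using finE neE by (simp add: Min_le_iff)
  have Mnpos: "Mn > 0" using eS[OF MnE] by simp
  have kap: "kappa A = sqrt Mx / sqrt Mn"
    by (simp add: kappa_def sigma_max_def sigma_min_def Mx_def Mn_def E_def G_def)
  have kap2: "(kappa A)^2 = Mx / Mn" using Mnpos MnMx by (simp add: kap power_divide)
  show "kappa A \<ge> 1" using Mnpos MnMx by (simp add: kap real_sqrt_le_iff)
  have "(kappa A)^2 * det G = Mx * (det G / Mn)" by (simp add: kap2)
  also have "\<dots> \<le> (real n * real m * H^2) * (S * det G)"
  proof (rule mult_mono)
    show "Mx \<le> real n * real m * H^2" using eU[OF MxE] Ule by simp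
    have SMn: "1 \<le> S * Mn" using eS[OF MnE] by simp
    have "1 / Mn \<le> S" using SMn Mnpos by (simp add: divide_le_eq)
    hence "det G * (1 / Mn) \<le> det G * S" using Dpos by (intro mult_left_mono) auto
    thus "det G / Mn \<le> S * det G" by (simp add: mult.commute)
    show "0 \<le> real n * real m * H^2" by simp
    show "0 \<le> det G / Mn" using Dpos Mnpos by simp
  qed
  also have "\<dots> \<le> (real n * real m * H^2) * (real n * (real m * H^2)^(n - 1))"
    by (intro mult_left_mono SD) simp
  also have "\<dots> = real n^2 * (real m * H^2)^(Suc (n - 1))"
    by (simp add: power2_eq_square algebra_simps)
  also have "\<dots> = real n^2 * real m^n * H^(2*n)"
    using n1 by (simp add: power_mult_distrib power_mult[symmetric] mult.commute)
  finally show "(kappa A)^2 * det (transpose A ** A) \<le> real CARD('n)^2 * real CARD('m)^CARD('n) * H^(2*CARD('n))"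
    by (simp add: G_def n_def m_def)
  show "det (transpose A ** A) > 0" using Dpos by (simp add: G_def)
qed

lemma det_Ints:
  fixes M :: "real^'n^'n"
  assumes "\<And>i j. M$i$j \<in> \<int>"
  shows "det M \<in> \<int>"
  unfolding det_def using assms by (intro Ints_sum Ints_mult Ints_prod) auto

lemma Ints_pos_ge1: fixes x :: real assumes "x \<in> \<int>" "x > 0" shows "x \<ge> 1"
proof -
  obtain k where k: "x = of_int k" using assms(1) by (rule Ints_cases)
  hence "k > 0" using assms(2) by simp
  hence "k \<ge> 1" by simp
  thus ?thesis using k by simp
qed

lemma Av_inner: fixes A :: "real^'n^'m" shows "(A *v w) \<bullet> r = w \<bullet> (transpose A *v r)"
  by (metis dot_lmul_matrix vector_transpose_matrix)

lemma ls_solution_eq: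
  fixes A :: "real^'n^'m"
  assumes injA: "inj ((*v) A)" and x0: "(transpose A ** A) *v x0 = transpose A *v b"
  shows "ls_solution A b = x0"
proof -
  define r where "r = A *v x0 - b"
  have Atr: "transpose A *v r = 0"
    using x0 by (simp add: r_def matrix_vector_mult_diff_distrib matrix_vector_mul_assoc)
  have ident: "(norm (A *v y - b))^2 = (norm (A *v (y - x0)))^2 + (norm (A *v x0 - b))^2" for y
  proof -
    have e: "A *v y - b = A *v (y - x0) + r" by (simp add: r_def matrix_vector_mult_diff_distrib)
    have o: "(A *v (y - x0)) \<bullet> r = 0" by (simp only: Av_inner Atr inner_zero_right)
    show ?thesis unfolding e power2_norm_eq_inner r_def[symmetric]
      using o inner_commute[of r "A *v (y - x0)"] by (simp only: inner_add_left inner_add_right)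
  qed
  show ?thesis unfolding ls_solution_def
  proof (rule the_equality)
    show "\<forall>y. (norm (A *v x0 - b))\<^sup>2 \<le> (norm (A *v y - b))\<^sup>2"
    proof
      fix y
      have "(norm (A *v (y - x0)))^2 \<ge> 0" by (rule zero_le_power2)
      thus "(norm (A *v x0 - b))\<^sup>2 \<le> (norm (A *v y - b))\<^sup>2" using ident[of y] by linarith
    qed
  next
    fix x assume "\<forall>y. (norm (A *v x - b))\<^sup>2 \<le> (norm (A *v y - b))\<^sup>2"
    hence "(norm (A *v x - b))\<^sup>2 \<le> (norm (A *v x0 - b))\<^sup>2" by blast
    hence "(norm (A *v (x - x0)))^2 \<le> 0" using ident[of x] by linarith
    hence "A *v (x - x0) = 0" by simp
    hence "A *v x = A *v x0" by (simp add: matrix_vector_mult_diff_distrib)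
    thus "x = x0" using injA by (simp add: inj_eq)
  qed
qed

lemma final_arith:
  fixes n m :: nat and H :: real
  assumes "n \<ge> 1" "m \<ge> 1" "H \<ge> 0"
  shows "3 * (real n^2 * real m^n * H^(2*n)) * sqrt (real m) * H
         \<le> 3 * real n powr (real n / 2 + 1) * real m powr (real n + 1 / 2) * H ^ (2 * n + 1)"
proof -
  have n2: "real n^2 \<le> real n powr (real n / 2 + 1)"
  proof (cases "n = 1")
    case True thus ?thesis by simp
  next
    case False
    hence n2: "n \<ge> 2" using assms(1) by simp
    have "real n^2 = real n powr 2" using assms(1) by (simp add: powr_realpow)
    also have "\<dots> \<le> real n powr (real n / 2 + 1)"
      using n2 by (intro powr_mono) auto
    finally show ?thesis .
  qed
  have mm: "real m^n * sqrt (real m) = real m powr (real n + 1 / 2)"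
    using assms(2) by (simp add: powr_add powr_realpow powr_half_sqrt)
  have HH: "H^(2*n) * H = H^(2*n+1)" by simp
  have "3 * (real n^2 * real m^n * H^(2*n)) * sqrt (real m) * H
        = 3 * real n^2 * (real m^n * sqrt (real m)) * (H^(2*n) * H)" by (simp only: mult_ac)
  also have "\<dots> \<le> 3 * real n powr (real n / 2 + 1) * (real m^n * sqrt (real m)) * (H^(2*n) * H)"
    using n2 assms by (intro mult_right_mono mult_left_mono) auto
  also have "\<dots> = 3 * real n powr (real n / 2 + 1) * real m powr (real n + 1 / 2) * H ^ (2 * n + 1)"
    by (simp only: mm HH)
  finally show ?thesis .
qed

theorem theorem2:
  fixes A :: "real^'n^'m" and b :: "real^'m"
  assumes "CARD('n) \<le> CARD('m)"
    and "\<forall>i j. A $ i $ j \<in> \<int>"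
    and "\<forall>i. b $ i \<in> \<int>"
    and "rank A = CARD('n)"
    and "\<not> (\<forall>y. b \<bullet> (A *v y) = 0)"
  shows "kappa_LS A b \<le> 3 * real CARD('n) powr (real CARD('n) / 2 + 1)
           * real CARD('m) powr (real CARD('n) + 1 / 2) * height A b ^ (2 * CARD('n) + 1)"
proof -
  define H where "H = height A b"
  define G where "G = transpose A ** A"
  define D where "D = det G"
  have injA: "inj ((*v) A)" using assms(4) full_rank_injective by blast
  have finA: "finite {\<bar>A $ i $ j\<bar> | i j. True}"
  proof -
    have "{\<bar>A $ i $ j\<bar> | i j. True} = (\<lambda>p. \<bar>A $ fst p $ snd p\<bar>) ` UNIV"
      by (auto simp: image_def)
    thus ?thesis by simp
  qed
  have finB: "finite {\<bar>b $ i\<bar> | i. True}"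
  proof -
    have "{\<bar>b $ i\<bar> | i. True} = (\<lambda>i. \<bar>b $ i\<bar>) ` UNIV" by auto
    thus ?thesis by simp
  qed
  have hA: "\<bar>A$i$j\<bar> \<le> H" for i j
    unfolding H_def height_def by (rule Max_ge) (use finA finB in auto)
  have hb: "\<bar>b$i\<bar> \<le> H" for i
    unfolding H_def height_def by (rule Max_ge) (use finA finB in auto)
  have H0: "H \<ge> 0" using hb[of undefined] by linarith
  have k1: "kappa A \<ge> 1" by (rule kappa_bound(1)[OF injA hA])
  have k2: "(kappa A)^2 * D \<le> real CARD('n)^2 * real CARD('m)^CARD('n) * H^(2*CARD('n))"
    unfolding D_def G_def by (rule kappa_bound(2)[OF injA hA])
  have Dpos: "D > 0" unfolding D_def G_def by (rule kappa_bound(3)[OF injA hA])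
  have detG: "det G \<noteq> 0" using Dpos by (simp add: D_def)
  define c where "c = transpose A *v b"
  obtain x0 where x0: "G *v x0 = c" using solve_exists[OF detG] by blast
  have ls: "ls_solution A b = x0" using x0 unfolding G_def c_def by (rule ls_solution_eq[OF injA])
  define r where "r = A *v x0 - b"
  have res: "ls_residual A b = r" by (simp add: ls_residual_def ls r_def)
  have Atr: "transpose A *v r = 0"
    using x0 by (simp add: r_def c_def G_def matrix_vector_mult_diff_distrib matrix_vector_mul_assoc)
  have orth: "(A *v x0) \<bullet> r = 0" by (simp only: Av_inner Atr inner_zero_right)
  have bb: "b \<bullet> b = (A *v x0) \<bullet> (A *v x0) + r \<bullet> r"
  proof -
    have "b = A *v x0 - r" by (simp add: r_def)
    hence "b \<bullet> b = (A *v x0 - r) \<bullet> (A *v x0 - r)" by simp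
    also have "\<dots> = (A *v x0) \<bullet> (A *v x0) + r \<bullet> r"
      using orth inner_commute[of r "A *v x0"] by (simp only: inner_diff_left inner_diff_right)
    finally show ?thesis .
  qed
  have c_ne: "c \<noteq> 0"
  proof
    assume c0: "c = 0"
    have "b \<bullet> (A *v y) = 0" for y
    proof -
      have "b \<bullet> (A *v y) = (A *v y) \<bullet> b" by (rule inner_commute)
      also have "\<dots> = y \<bullet> c" unfolding c_def by (rule Av_inner)
      finally show ?thesis using c0 by simp
    qed
    thus False using assms(5) by blast
  qed
  have Ax0_ne: "A *v x0 \<noteq> 0"
  proof
    assume "A *v x0 = 0"
    hence "G *v x0 = 0" by (simp add: G_def matrix_vector_mul_assoc[symmetric])
    thus False using x0 c_ne by simp
  qed
  have q: "x0 \<bullet> c = (A *v x0) \<bullet> (A *v x0)"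
    using quad_eq[of x0 A x0] x0 by (simp add: G_def)
  have Gint: "G$i$j \<in> \<int>" for i j
    using assms(2) by (simp add: G_def matrix_matrix_mult_def transpose_def Ints_sum Ints_mult)
  have cint: "c$i \<in> \<int>" for i
    using assms(2,3) by (simp add: c_def matrix_vector_mult_def transpose_def Ints_sum Ints_mult)
  have Dint: "D \<in> \<int>" unfolding D_def by (rule det_Ints[OF Gint])
  have x0eq: "x0 = (\<chi> k. det (\<chi> i j. if j = k then c$i else G$i$j) / det G)"
    using cramer[OF detG] x0 by blast
  have Dx0: "D * x0$k \<in> \<int>" for k
  proof -
    have "D * x0$k = det (\<chi> i j. if j = k then c$i else G$i$j)"
      using detG by (subst x0eq) (simp add: D_def)
    also have "\<dots> \<in> \<int>" by (rule det_Ints) (simp add: cint Gint)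
    finally show ?thesis .
  qed
  have Dxc: "D * (x0 \<bullet> c) \<in> \<int>"
  proof -
    have "D * (x0 \<bullet> c) = (\<Sum>k\<in>UNIV. (D * x0$k) * c$k)"
      by (simp add: inner_vec_def sum_distrib_left mult.assoc)
    also have "\<dots> \<in> \<int>" by (intro Ints_sum Ints_mult Dx0 cint)
    finally show ?thesis .
  qed
  have na_pos: "(A *v x0) \<bullet> (A *v x0) > 0" using Ax0_ne by simp
  have D1: "D \<ge> 1" by (rule Ints_pos_ge1[OF Dint Dpos])
  have DA: "D * ((A *v x0) \<bullet> (A *v x0)) \<ge> 1"
    using Ints_pos_ge1[OF Dxc] Dpos na_pos q by simp
  define na where "na = norm (A *v x0)"
  define nb where "nb = norm b"
  define nr where "nr = norm r"
  have na_gt: "na > 0" using Ax0_ne by (simp add: na_def)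
  have b_ne: "b \<noteq> 0" using c_ne by (auto simp: c_def)
  have nb_gt: "nb > 0" using b_ne by (simp add: nb_def)
  have nsq: "nb^2 = na^2 + nr^2" using bb by (simp add: na_def nb_def nr_def power2_norm_eq_inner)
  define s where "s = nr / nb"
  have s0: "s \<ge> 0" by (simp add: s_def nr_def nb_def)
  have nr_le: "nr \<le> nb"
  proof (rule power2_le_imp_le)
    have "0 \<le> na^2" by (rule zero_le_power2)
    thus "nr^2 \<le> nb^2" using nsq by linarith
    show "0 \<le> nb" unfolding nb_def by (rule norm_ge_zero)
  qed
  have s1: "s \<le> 1" using nr_le nb_gt by (simp add: s_def)
  have theta: "ls_theta A b = arcsin s" by (simp add: ls_theta_def res s_def nr_def nb_def)
  have one_s: "1 - s^2 = (na / nb)^2"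
  proof -
    have nb2: "nb^2 > 0" using nb_gt by simp
    have "1 - s^2 = nb^2 / nb^2 - nr^2 / nb^2" using nb2 by (simp add: s_def power_divide)
    also have "\<dots> = (nb^2 - nr^2) / nb^2" by (rule diff_divide_distrib[symmetric])
    also have "\<dots> = na^2 / nb^2" using nsq by simp
    also have "\<dots> = (na / nb)^2" by (simp add: power_divide)
    finally show ?thesis .
  qed
  define C where "C = na / nb"
  have C_pos: "C > 0" using na_gt nb_gt by (simp add: C_def)
  have cos_t: "cos (ls_theta A b) = C"
    using s0 s1 one_s na_gt nb_gt by (simp add: theta cos_arcsin C_def)
  have sin_t: "sin (ls_theta A b) = s" using s0 s1 by (simp add: theta)
  have tan_t: "tan (ls_theta A b) = s / C" by (simp add: tan_def sin_t cos_t)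
  define K where "K = (kappa A)^2"
  have K_ge: "kappa A \<le> K" using k1 by (simp add: K_def power2_eq_square)
  have K0: "K \<ge> 0" by (simp add: K_def)
  have "kappa_LS A b = (2 * kappa A + s * K) / C"
    by (simp add: kappa_LS_def cos_t tan_t K_def add_divide_distrib)
  also have "\<dots> \<le> (3 * K) / C"
  proof (rule divide_right_mono)
    have "s * K \<le> 1 * K" using s1 K0 by (intro mult_right_mono) auto
    thus "2 * kappa A + s * K \<le> 3 * K" using K_ge by linarith
  qed (use C_pos in simp)
  also have "\<dots> = 3 * K * nb * (1 / na)" by (simp add: C_def)
  also have "\<dots> \<le> 3 * K * (sqrt (real CARD('m)) * H) * sqrt D"
  proof (intro mult_mono mult_left_mono)
    have "nb^2 = b \<bullet> b" by (simp add: nb_def power2_norm_eq_inner)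
    also have "\<dots> = (\<Sum>i\<in>UNIV. (b$i)^2)" by (rule normsq_vec)
    also have "\<dots> \<le> (\<Sum>i\<in>(UNIV::'m set). H^2)"
    proof (rule sum_mono)
      fix i show "(b$i)^2 \<le> H^2" using power_mono[of "\<bar>b$i\<bar>" H 2] hb[of i] by simp
    qed
    also have "\<dots> = (sqrt (real CARD('m)) * H)^2" using H0 by (simp add: power_mult_distrib)
    finally have nb2: "nb^2 \<le> (sqrt (real CARD('m)) * H)^2" .
    show "nb \<le> sqrt (real CARD('m)) * H"
      by (rule power2_le_imp_le[OF nb2]) (use H0 in simp)
    have "(sqrt D * na)^2 = D * na^2" using Dpos by (simp add: power_mult_distrib)
    also have "\<dots> \<ge> 1" using DA by (simp add: na_def power2_norm_eq_inner)
    finally have sq1: "1^2 \<le> (sqrt D * na)^2" by simp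
    have "1 \<le> sqrt D * na" by (rule power2_le_imp_le[OF sq1]) (use Dpos na_gt in simp)
    thus "1 / na \<le> sqrt D" using na_gt by (simp add: divide_le_eq)
  qed (use K0 H0 Dpos na_gt nb_gt in auto)
  also have "\<dots> = 3 * (K * sqrt D) * sqrt (real CARD('m)) * H" by (simp only: mult_ac)
  also have "\<dots> \<le> 3 * (real CARD('n)^2 * real CARD('m)^CARD('n) * H^(2*CARD('n))) * sqrt (real CARD('m)) * H"
  proof (intro mult_right_mono mult_left_mono)
    have sD1: "sqrt D \<ge> 1" using D1 by simp
    have "sqrt D \<le> sqrt D * sqrt D" using sD1 mult_left_mono[of 1 "sqrt D" "sqrt D"] by simp
    also have "\<dots> = D" using Dpos by simp
    finally have "K * sqrt D \<le> K * D" using K0 by (intro mult_left_mono) auto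
    also have "\<dots> \<le> real CARD('n)^2 * real CARD('m)^CARD('n) * H^(2*CARD('n))"
      using k2 by (simp add: K_def)
    finally show "K * sqrt D \<le> real CARD('n)^2 * real CARD('m)^CARD('n) * H^(2*CARD('n))" .
  qed (use H0 in auto)
  also have "\<dots> \<le> 3 * real CARD('n) powr (real CARD('n) / 2 + 1)
           * real CARD('m) powr (real CARD('n) + 1 / 2) * H ^ (2 * CARD('n) + 1)"
    by (rule final_arith) (use H0 in \<open>auto simp: Suc_leI\<close>)
  finally show ?thesis by (simp only: H_def)
qed

end
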